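(* Let $f$ be a $T$-norm with an additive generator $\mu$ such that for all $0\leq x\leq y\leq 1$ and all $h\geq 0$ with $y+h\leq 1$, $\mu(x)-\mu(x+h)\geq \mu(y)-\mu(y+h)$. Then $f$ satisfies property $A$.
   Context: A $T$-norm is a function $f:[0,1]^2\to[0,1]$ that is commutative, associative, monotonic ($x\leq y$ implies $f(x,z)\leq f(y,z)$) and satisfies $f(x,1)=x$. An additive generator of $f$ is a strictly decreasing function $\mu:[0,1]\to[0,\infty]$, right-continuous at $0$, with $\mu(1)=0$, such that for all $x,y\in[0,1]$, $\mu(x)+\mu(y)\in \mathrm{Range}(\mu)\cup[\mu(0),\infty]$ and $f(x,y)=\mu^{(-1)}(\mu(x)+\mu(y))$, where $\mu^{(-1)}:[0,\infty]\to[0,1]$ is the pseudo-inverse $\mu^{(-1)}(t)=\sup\{x\in[0,1]:\mu(x)>t\}$ (with $\sup\emptyset=0$). A function $f:[0,1]^2\to[0,1]$ satisfies property $A$ if for all $0\leq x\leq y\leq z\leq w\leq 1$, $w+x\leq y+z$ implies $f(x,w)\leq f(y,z)$. *)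

theory Defs
  imports "HOL-Analysis.Analysis" "HOL-Library.Extended_Nonnegative_Real"
begin

text \<open>T-norms on [0,1]; functions are total on real but only their values on [0,1] matter.\<close>
definition is_tnorm :: "(real \<Rightarrow> real \<Rightarrow> real) \<Rightarrow> bool" where
  "is_tnorm f \<longleftrightarrow>
     (\<forall>x\<in>{0..1}. \<forall>y\<in>{0..1}. f x y \<in> {0..1}) \<and>
     (\<forall>x\<in>{0..1}. \<forall>y\<in>{0..1}. f x y = f y x) \<and>
     (\<forall>x\<in>{0..1}. \<forall>y\<in>{0..1}. \<forall>z\<in>{0..1}. f x (f y z) = f (f x y) z) \<and>
     (\<forall>x\<in>{0..1}. \<forall>y\<in>{0..1}. \<forall>z\<in>{0..1}. x \<le> y \<longrightarrow> f x z \<le> f y z) \<and>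
     (\<forall>x\<in>{0..1}. f x 1 = x)"

definition pseudo_inv :: "(real \<Rightarrow> ennreal) \<Rightarrow> ennreal \<Rightarrow> real" where
  "pseudo_inv \<mu> t = (if {x\<in>{0..1}. \<mu> x > t} = {} then 0 else Sup {x\<in>{0..1}. \<mu> x > t})"

definition is_additive_generator :: "(real \<Rightarrow> ennreal) \<Rightarrow> (real \<Rightarrow> real \<Rightarrow> real) \<Rightarrow> bool" where
  "is_additive_generator \<mu> f \<longleftrightarrow>
     (\<forall>x\<in>{0..1}. \<forall>y\<in>{0..1}. x < y \<longrightarrow> \<mu> y < \<mu> x) \<and>
     (\<mu> \<longlongrightarrow> \<mu> 0) (at_right 0) \<and>
     \<mu> 1 = 0 \<and>
     (\<forall>x\<in>{0..1}. \<forall>y\<in>{0..1}. \<mu> x + \<mu> y \<in> \<mu> ` {0..1} \<union> {\<mu> 0..}) \<and>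
     (\<forall>x\<in>{0..1}. \<forall>y\<in>{0..1}. f x y = pseudo_inv \<mu> (\<mu> x + \<mu> y))"

definition property_A :: "(real \<Rightarrow> real \<Rightarrow> real) \<Rightarrow> bool" where
  "property_A f \<longleftrightarrow>
     (\<forall>x y z w. 0 \<le> x \<and> x \<le> y \<and> y \<le> z \<and> z \<le> w \<and> w \<le> 1 \<and> w + x \<le> y + z
        \<longrightarrow> f x w \<le> f y z)"

end

theory Submission
  imports Defs
begin

lemma pseudo_inv_anti:
  assumes "t1 \<le> t2"
  shows "pseudo_inv \<mu> t2 \<le> pseudo_inv \<mu> t1"
proof -
  let ?S1 = "{x\<in>{0..1}. \<mu> x > t1}" and ?S2 = "{x\<in>{0..1}. \<mu> x > t2}"
  have sub: "?S2 \<subseteq> ?S1" using assms by (auto intro: le_less_trans)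
  have bdd: "bdd_above ?S1" by (rule bdd_aboveI[of _ 1]) auto
  show ?thesis
  proof (cases "?S2 = {}")
    case True
    then have "pseudo_inv \<mu> t2 = 0" unfolding pseudo_inv_def by simp
    moreover have "0 \<le> pseudo_inv \<mu> t1"
    proof (cases "?S1 = {}")
      case False
      then obtain a where "a \<in> ?S1" by blast
      then have a0: "0 \<le> a" by simp
      have "a \<le> Sup ?S1" by (rule cSup_upper[OF \<open>a \<in> ?S1\<close> bdd])
      then have "0 \<le> Sup ?S1" using a0 by linarith
      then show ?thesis using False unfolding pseudo_inv_def by simp
    qed (simp add: pseudo_inv_def)
    ultimately show ?thesis by simp
  next
    case False
    then have ne1: "?S1 \<noteq> {}" using sub by blast
    have "Sup ?S2 \<le> Sup ?S1" by (rule cSup_subset_mono[OF False bdd sub])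
    moreover have "pseudo_inv \<mu> t2 = Sup ?S2" unfolding pseudo_inv_def by (simp only: False if_False)
    moreover have "pseudo_inv \<mu> t1 = Sup ?S1" unfolding pseudo_inv_def by (simp only: ne1 if_False)
    ultimately show ?thesis by simp
  qed
qed

theorem theorem5:
  fixes f :: "real \<Rightarrow> real \<Rightarrow> real" and \<mu> :: "real \<Rightarrow> ennreal"
  assumes "is_tnorm f"
    and "is_additive_generator \<mu> f"
    and "\<And>x y h. 0 \<le> x \<Longrightarrow> x \<le> y \<Longrightarrow> y \<le> 1 \<Longrightarrow> 0 \<le> h \<Longrightarrow> y + h \<le> 1 \<Longrightarrow>
           \<mu> y + \<mu> (x + h) \<le> \<mu> x + \<mu> (y + h)"
  shows "property_A f"
  unfolding property_A_def
proof (intro allI impI)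
  fix x y z w :: real
  assume h: "0 \<le> x \<and> x \<le> y \<and> y \<le> z \<and> z \<le> w \<and> w \<le> 1 \<and> w + x \<le> y + z"
  have dec: "\<And>a b. a \<in> {0..1} \<Longrightarrow> b \<in> {0..1} \<Longrightarrow> a < b \<Longrightarrow> \<mu> b < \<mu> a"
    using assms(2) unfolding is_additive_generator_def by blast
  have fe: "\<And>a b. a \<in> {0..1} \<Longrightarrow> b \<in> {0..1} \<Longrightarrow> f a b = pseudo_inv \<mu> (\<mu> a + \<mu> b)"
    using assms(2) unfolding is_additive_generator_def by blast
  have m: "\<mu> z \<le> \<mu> (x + (w - y))"
  proof (cases "x + (w - y) = z")
    case False
    then show ?thesis using h dec[of "x + (w - y)" z] by force
  qed simp
  have k: "\<mu> y + \<mu> (x + (w - y)) \<le> \<mu> x + \<mu> (y + (w - y))"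
    using h by (intro assms(3)) auto
  have "\<mu> y + \<mu> z \<le> \<mu> x + \<mu> w"
  proof -
    have "\<mu> y + \<mu> z \<le> \<mu> y + \<mu> (x + (w - y))" using m by (rule add_left_mono)
    also have "\<dots> \<le> \<mu> x + \<mu> (y + (w - y))" by (rule k)
    also have "y + (w - y) = w" by simp
    finally show ?thesis .
  qed
  then have "pseudo_inv \<mu> (\<mu> x + \<mu> w) \<le> pseudo_inv \<mu> (\<mu> y + \<mu> z)"
    by (rule pseudo_inv_anti)
  then show "f x w \<le> f y z" using h fe[of x w] fe[of y z] by auto
qed

end
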